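(* Let $G$ be a finitely generated group and $\phi\in\mathrm{Aut}(G)$. Then: (i) if $GCP_{f.g.}(G\rtimes_\phi\mathbb{Z})$ is decidable, then $GBrCP_{(f.g.,\phi)}(G)$ is decidable; (ii) if $GCP_{f.g.}(G\rtimes\mathbb{Z})$ is decidable, then $GBrCP_{f.g.}(G)$ is decidable; (iii) if $GCP_{[f.g.\,coset]}(G\rtimes_\phi\mathbb{Z})$ is decidable, then $GBrCP_{([f.g.\,coset],\phi)}(G)$ and $GTCP_{([f.g.\,coset],\phi)}(G)$ are decidable; (iv) if $GCP_{[f.g.\,coset]}(G\rtimes\mathbb{Z})$ is decidable, then $GBrCP_{[f.g.\,coset]}(G)$ and $GTCP_{[f.g.\,coset]}(G)$ are decidable.
   Context: $G\rtimes_\psi\mathbb{Z}$ is generated by $G$ and $t$ with $t^{-1}at=\psi(a)$. Subgroups are given by finite generating sets, cosets $yH$ by $y$ and generators of $H$. For a class $\mathcal C$ ($f.g.$ = finitely generated subgroups, $[f.g.\,coset]$ = cosets of finitely generated subgroups): $GCP_{\mathcal C}(X)$: given $K\in\mathcal C$ in the group $X$ and $x\in X$, decide whether some conjugate of $x$ lies in $K$; $GCP_{\mathcal C}(G\rtimes\mathbb{Z})$ is the uniform version in which the automorphism $\psi$ defining $G\rtimes_\psi\mathbb{Z}$ is also part of the input. $GBrCP_{\mathcal C}(G)$: given $K\in\mathcal C$ in $G$, $\psi\in\mathrm{Aut}(G)$, $x\in G$, decide whether some $\psi^k(x)$ ($k\in\mathbb{Z}$) is conjugate to an element of $K$. $GTCP_{\mathcal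 C}(G)$: given $K$, $\psi$, $x$, decide whether there is $z\in G$ with $\psi(z)^{-1}xz\in K$. A subscript $(\mathcal C,\phi)$ means the automorphism is fixed to be $\phi$ rather than being part of the input. *)

theory Defs
  imports "HOL-Algebra.Algebra" "HOL-Library.Nat_Bijection"
begin

text \<open>recfn n f: f is a total recursive function of arity n (only its values on
  argument lists of length n matter).  Minimisation is only allowed when a root
  always exists, so all functions in the class are total.\<close>

inductive recfn :: "nat \<Rightarrow> (nat list \<Rightarrow> nat) \<Rightarrow> bool" where
  rf_zero: "recfn n (\<lambda>xs. 0)"
| rf_succ: "recfn 1 (\<lambda>xs. Suc (hd xs))"
| rf_proj: "i < n \<Longrightarrow> recfn n (\<lambda>xs. xs ! i)"
| rf_comp: "recfn m f \<Longrightarrow> length gs = m \<Longrightarrow> (\<forall>g\<in>set gs. recfn n g)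
             \<Longrightarrow> recfn n (\<lambda>xs. f (map (\<lambda>g. g xs) gs))"
| rf_prim: "recfn n f \<Longrightarrow> recfn (Suc (Suc n)) g
             \<Longrightarrow> recfn (Suc n) (\<lambda>xs. rec_nat (f (tl xs)) (\<lambda>y r. g (y # r # tl xs)) (hd xs))"
| rf_mu: "recfn (Suc n) f \<Longrightarrow> (\<forall>xs. length xs = n \<longrightarrow> (\<exists>y. f (y # xs) = 0))
             \<Longrightarrow> recfn n (\<lambda>xs. LEAST y. f (y # xs) = 0)"

text \<open>A (promise) decision problem: a set D of valid input codes and the set S of
  yes-instances.  It is decidable if a total recursive function answers correctly
  (0 = yes) on every valid input.\<close>

definition decidable :: "nat set \<times> nat set \<Rightarrow> bool" where
  "decidable P \<longleftrightarrow> (\<exists>f. recfn 1 f \<and> (\<forall>c\<in>fst P. (f [c] = 0 \<longleftrightarrow> c \<in> snd P)))"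

text \<open>Words over generators a_0..a_{n-1}: letter 2i stands for a_i, 2i+1 for a_i^{-1}.\<close>

definition word_ok :: "nat \<Rightarrow> nat list \<Rightarrow> bool" where
  "word_ok n w \<longleftrightarrow> (\<forall>l\<in>set w. l < 2 * n)"

definition enc_words :: "nat list list \<Rightarrow> nat" where
  "enc_words ws = list_encode (map list_encode ws)"

definition eval_word :: "('a, 'b) monoid_scheme \<Rightarrow> 'a list \<Rightarrow> nat list \<Rightarrow> 'a" where
  "eval_word H hs w = foldr (\<lambda>l acc.
      (if even l then hs ! (l div 2) else inv\<^bsub>H\<^esub> (hs ! (l div 2))) \<otimes>\<^bsub>H\<^esub> acc) w \<one>\<^bsub>H\<^esub>"

definition autpow :: "('a, 'b) monoid_scheme \<Rightarrow> ('a \<Rightarrow> 'a) \<Rightarrow> int \<Rightarrow> 'a \<Rightarrow> 'a" where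
  "autpow G \<psi> k = (if 0 \<le> k then \<psi> ^^ nat k else (inv_into (carrier G) \<psi>) ^^ nat (- k))"

text \<open>The pair (g,k) represents g t^k; from t^{-1} a t = \<psi>(a) one gets
  t^k h = \<psi>^{-k}(h) t^k.\<close>
definition sdp :: "('a, 'b) monoid_scheme \<Rightarrow> ('a \<Rightarrow> 'a) \<Rightarrow> ('a \<times> int) monoid" where
  "sdp G \<psi> = \<lparr>carrier = carrier G \<times> UNIV,
              monoid.mult = (\<lambda>(g, k) (h, l). (g \<otimes>\<^bsub>G\<^esub> autpow G \<psi> (- k) h, k + l)),
              monoid.one = (\<one>\<^bsub>G\<^esub>, 0)\<rparr>"

text \<open>Generators of G \<rtimes> Z: those of G (letters 0..n-1) followed by t (letter n).\<close>
definition sdp_gens :: "('a, 'b) monoid_scheme \<Rightarrow> 'a list \<Rightarrow> ('a \<times> int) list" where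
  "sdp_gens G gs = map (\<lambda>g. (g, 0)) gs @ [(\<one>\<^bsub>G\<^esub>, 1)]"

datatype setclass = FG | FGCoset

text \<open>A member of the class is given by (y, Ks): the subgroup generated by the
  words Ks (for FG, y must be the empty word), resp. the coset y<H> (FGCoset).\<close>

definition K_ok :: "setclass \<Rightarrow> nat \<Rightarrow> nat list \<Rightarrow> nat list list \<Rightarrow> bool" where
  "K_ok cls n y Ks \<longleftrightarrow> word_ok n y \<and> (\<forall>w\<in>set Ks. word_ok n w) \<and> (cls = FG \<longrightarrow> y = [])"

definition K_code :: "setclass \<Rightarrow> nat list \<Rightarrow> nat list list \<Rightarrow> nat" where
  "K_code cls y Ks = (if cls = FG then enc_words Ks else prod_encode (list_encode y, enc_words Ks))"

definition K_set :: "setclass \<Rightarrow> ('a, 'b) monoid_scheme \<Rightarrow> 'a list \<Rightarrow> nat list \<Rightarrow> nat list list \<Rightarrow> 'a set" where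
  "K_set cls H hs y Ks = (if cls = FG then generate H (eval_word H hs ` set Ks)
      else eval_word H hs y <#\<^bsub>H\<^esub> generate H (eval_word H hs ` set Ks))"

definition fixed_problem :: "setclass \<Rightarrow> nat \<Rightarrow> (nat list \<Rightarrow> nat list list \<Rightarrow> nat list \<Rightarrow> bool)
    \<Rightarrow> nat set \<times> nat set" where
  "fixed_problem cls n P =
    ({prod_encode (K_code cls y Ks, list_encode x) | y Ks x. K_ok cls n y Ks \<and> word_ok n x},
     {prod_encode (K_code cls y Ks, list_encode x) | y Ks x. K_ok cls n y Ks \<and> word_ok n x \<and> P y Ks x})"

text \<open>Uniform problem: additionally an automorphism \<psi> of G is part of the input,
  given by the words ps (over the n = length gs generators of G) representing the
  images of the generators; K and x are words over m letters.\<close>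
definition aut_given :: "('a, 'b) monoid_scheme \<Rightarrow> 'a list \<Rightarrow> nat list list \<Rightarrow> ('a \<Rightarrow> 'a) \<Rightarrow> bool" where
  "aut_given G gs ps \<psi> \<longleftrightarrow> \<psi> \<in> iso G G \<and> length ps = length gs \<and>
     (\<forall>i < length gs. \<psi> (gs ! i) = eval_word G gs (ps ! i))"

definition uniform_problem :: "setclass \<Rightarrow> ('a, 'b) monoid_scheme \<Rightarrow> 'a list \<Rightarrow> nat
    \<Rightarrow> (('a \<Rightarrow> 'a) \<Rightarrow> nat list \<Rightarrow> nat list list \<Rightarrow> nat list \<Rightarrow> bool) \<Rightarrow> nat set \<times> nat set" where
  "uniform_problem cls G gs m P =
    ({prod_encode (enc_words ps, prod_encode (K_code cls y Ks, list_encode x)) | ps y Ks x.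
        (\<forall>w\<in>set ps. word_ok (length gs) w) \<and> (\<exists>\<psi>. aut_given G gs ps \<psi>) \<and>
        K_ok cls m y Ks \<and> word_ok m x},
     {prod_encode (enc_words ps, prod_encode (K_code cls y Ks, list_encode x)) | ps y Ks x.
        (\<forall>w\<in>set ps. word_ok (length gs) w) \<and> (\<exists>\<psi>. aut_given G gs ps \<psi>) \<and>
        K_ok cls m y Ks \<and> word_ok m x \<and>
        (\<exists>\<psi>. aut_given G gs ps \<psi> \<and> P \<psi> y Ks x)})"

definition gcp_pred :: "setclass \<Rightarrow> ('a, 'b) monoid_scheme \<Rightarrow> 'a list \<Rightarrow> nat list \<Rightarrow> nat list list \<Rightarrow> nat list \<Rightarrow> bool" where
  "gcp_pred cls H hs y Ks x \<longleftrightarrow> (\<exists>z\<in>carrier H.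
      inv\<^bsub>H\<^esub> z \<otimes>\<^bsub>H\<^esub> eval_word H hs x \<otimes>\<^bsub>H\<^esub> z \<in> K_set cls H hs y Ks)"

definition brcp_pred :: "setclass \<Rightarrow> ('a, 'b) monoid_scheme \<Rightarrow> 'a list \<Rightarrow> ('a \<Rightarrow> 'a) \<Rightarrow> nat list \<Rightarrow> nat list list \<Rightarrow> nat list \<Rightarrow> bool" where
  "brcp_pred cls G gs \<psi> y Ks x \<longleftrightarrow> (\<exists>k::int. \<exists>z\<in>carrier G.
      inv\<^bsub>G\<^esub> z \<otimes>\<^bsub>G\<^esub> autpow G \<psi> k (eval_word G gs x) \<otimes>\<^bsub>G\<^esub> z \<in> K_set cls G gs y Ks)"

definition tcp_pred :: "setclass \<Rightarrow> ('a, 'b) monoid_scheme \<Rightarrow> 'a list \<Rightarrow> ('a \<Rightarrow> 'a) \<Rightarrow> nat list \<Rightarrow> nat list list \<Rightarrow> nat list \<Rightarrow> bool" where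
  "tcp_pred cls G gs \<psi> y Ks x \<longleftrightarrow> (\<exists>z\<in>carrier G.
      inv\<^bsub>G\<^esub> (\<psi> z) \<otimes>\<^bsub>G\<^esub> eval_word G gs x \<otimes>\<^bsub>G\<^esub> z \<in> K_set cls G gs y Ks)"

definition GCP_fixed :: "setclass \<Rightarrow> ('a, 'b) monoid_scheme \<Rightarrow> 'a list \<Rightarrow> ('a \<Rightarrow> 'a) \<Rightarrow> nat set \<times> nat set" where
  "GCP_fixed cls G gs \<phi> = fixed_problem cls (Suc (length gs)) (gcp_pred cls (sdp G \<phi>) (sdp_gens G gs))"

definition GCP_unif :: "setclass \<Rightarrow> ('a, 'b) monoid_scheme \<Rightarrow> 'a list \<Rightarrow> nat set \<times> nat set" where
  "GCP_unif cls G gs = uniform_problem cls G gs (Suc (length gs))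
      (\<lambda>\<psi>. gcp_pred cls (sdp G \<psi>) (sdp_gens G gs))"

definition GBrCP_fixed :: "setclass \<Rightarrow> ('a, 'b) monoid_scheme \<Rightarrow> 'a list \<Rightarrow> ('a \<Rightarrow> 'a) \<Rightarrow> nat set \<times> nat set" where
  "GBrCP_fixed cls G gs \<phi> = fixed_problem cls (length gs) (brcp_pred cls G gs \<phi>)"

definition GBrCP_unif :: "setclass \<Rightarrow> ('a, 'b) monoid_scheme \<Rightarrow> 'a list \<Rightarrow> nat set \<times> nat set" where
  "GBrCP_unif cls G gs = uniform_problem cls G gs (length gs) (brcp_pred cls G gs)"

definition GTCP_fixed :: "setclass \<Rightarrow> ('a, 'b) monoid_scheme \<Rightarrow> 'a list \<Rightarrow> ('a \<Rightarrow> 'a) \<Rightarrow> nat set \<times> nat set" where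
  "GTCP_fixed cls G gs \<phi> = fixed_problem cls (length gs) (tcp_pred cls G gs \<phi>)"

definition GTCP_unif :: "setclass \<Rightarrow> ('a, 'b) monoid_scheme \<Rightarrow> 'a list \<Rightarrow> nat set \<times> nat set" where
  "GTCP_unif cls G gs = uniform_problem cls G gs (length gs) (tcp_pred cls G gs)"

end

theory Submission
  imports Defs
begin


definition rf :: "nat \<Rightarrow> (nat list \<Rightarrow> nat) \<Rightarrow> bool" where
  "rf n f \<longleftrightarrow> (\<exists>g. recfn n g \<and> (\<forall>xs. length xs = n \<longrightarrow> g xs = f xs))"

lemma rf_cong: "rf n f \<Longrightarrow> (\<And>xs. length xs = n \<Longrightarrow> f xs = g xs) \<Longrightarrow> rf n g"
  unfolding rf_def by metis

lemma rf_cong': "rf n f \<Longrightarrow> n = m \<Longrightarrow> (\<And>xs. length xs = m \<Longrightarrow> f xs = g xs) \<Longrightarrow> rf m g"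
  unfolding rf_def by metis

lemma rf_const: "rf n (\<lambda>xs. k)"
proof (induction k)
  case 0 then show ?case unfolding rf_def using rf_zero by blast
next
  case (Suc k)
  then obtain g where g: "recfn n g" "\<forall>xs. length xs = n \<longrightarrow> g xs = k" unfolding rf_def by blast
  have "recfn n (\<lambda>xs. (\<lambda>xs. Suc (hd xs)) (map (\<lambda>g. g xs) [g]))"
    by (rule rf_comp[OF rf_succ]) (use g in auto)
  then show ?case unfolding rf_def using g by auto
qed

lemma rf_proj': "i < n \<Longrightarrow> rf n (\<lambda>xs. xs ! i)"
  unfolding rf_def using rf_proj by blast

lemma rf_comp1:
  assumes "rf 1 (\<lambda>xs. h (xs!0))" "rf n g"
  shows "rf n (\<lambda>xs. h (g xs))"
proof -
  obtain F where F: "recfn 1 F" "\<forall>xs. length xs = 1 \<longrightarrow> F xs = h (xs!0)" using assms(1) unfolding rf_def by blast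
  obtain G where G: "recfn n G" "\<forall>xs. length xs = n \<longrightarrow> G xs = g xs" using assms(2) unfolding rf_def by blast
  have "recfn n (\<lambda>xs. F (map (\<lambda>g. g xs) [G]))"
    by (rule rf_comp[OF F(1)]) (use G in auto)
  then show ?thesis unfolding rf_def using F G by (intro exI[of _ "\<lambda>xs. F (map (\<lambda>g. g xs) [G])"]) auto
qed

lemma rf_comp2:
  assumes "rf 2 (\<lambda>xs. h (xs!0) (xs!1))" "rf n g1" "rf n g2"
  shows "rf n (\<lambda>xs. h (g1 xs) (g2 xs))"
proof -
  obtain F where F: "recfn 2 F" "\<forall>xs. length xs = 2 \<longrightarrow> F xs = h (xs!0) (xs!1)" using assms(1) unfolding rf_def by blast
  obtain G1 where G1: "recfn n G1" "\<forall>xs. length xs = n \<longrightarrow> G1 xs = g1 xs" using assms(2) unfolding rf_def by blast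
  obtain G2 where G2: "recfn n G2" "\<forall>xs. length xs = n \<longrightarrow> G2 xs = g2 xs" using assms(3) unfolding rf_def by blast
  have "recfn n (\<lambda>xs. F (map (\<lambda>g. g xs) [G1, G2]))"
    by (rule rf_comp[OF F(1)]) (use G1 G2 in auto)
  then show ?thesis unfolding rf_def using F G1 G2 by (intro exI[of _ "\<lambda>xs. F (map (\<lambda>g. g xs) [G1, G2])"]) auto
qed

lemma rf_prim':
  assumes "rf n f" "rf (Suc (Suc n)) g"
  shows "rf (Suc n) (\<lambda>xs. rec_nat (f (tl xs)) (\<lambda>y r. g (y # r # tl xs)) (hd xs))"
proof -
  obtain F where F: "recfn n F" "\<forall>xs. length xs = n \<longrightarrow> F xs = f xs" using assms(1) unfolding rf_def by blast
  obtain G where G: "recfn (Suc (Suc n)) G" "\<forall>xs. length xs = Suc (Suc n) \<longrightarrow> G xs = g xs" using assms(2) unfolding rf_def by blast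
  have R: "recfn (Suc n) (\<lambda>xs. rec_nat (F (tl xs)) (\<lambda>y r. G (y # r # tl xs)) (hd xs))"
    by (rule rf_prim[OF F(1) G(1)])
  have "rec_nat (F (tl xs)) (\<lambda>y r. G (y # r # tl xs)) k = rec_nat (f (tl xs)) (\<lambda>y r. g (y # r # tl xs)) k"
    if "length xs = Suc n" for xs k
    using that F G by (induction k) auto
  then show ?thesis unfolding rf_def using R by blast
qed

lemma rf_mu':
  assumes "rf (Suc n) f" "\<forall>xs. length xs = n \<longrightarrow> (\<exists>y. f (y # xs) = 0)"
  shows "rf n (\<lambda>xs. LEAST y. f (y # xs) = 0)"
proof -
  obtain F where F: "recfn (Suc n) F" "\<forall>xs. length xs = Suc n \<longrightarrow> F xs = f xs" using assms(1) unfolding rf_def by blast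
  have R: "recfn n (\<lambda>xs. LEAST y. F (y # xs) = 0)"
    by (rule rf_mu[OF F(1)]) (use F assms(2) in auto)
  show ?thesis unfolding rf_def using F R by (intro exI[of _ "\<lambda>xs. LEAST y. F (y # xs) = 0"]) auto
qed

lemma rf_succ': "rf 1 (\<lambda>xs. Suc (xs!0))"
  unfolding rf_def
  apply (rule exI[of _ "\<lambda>xs. Suc (hd xs)"], rule conjI, rule rf_succ)
  by (auto simp: hd_conv_nth length_Suc_conv)

lemma rf_add: "rf 2 (\<lambda>xs. xs!0 + xs!1)"
proof -
  have "rf 3 (\<lambda>xs. Suc (xs!1))"
    by (rule rf_comp1[OF rf_succ']) (rule rf_proj', simp)
  then have S3: "rf (Suc (Suc (Suc 0))) (\<lambda>xs. Suc (xs!1))" unfolding numeral_3_eq_3 .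
  have "rf (Suc (Suc 0)) (\<lambda>xs. rec_nat ((tl xs) ! 0) (\<lambda>y r. Suc ((y # r # tl xs) ! 1)) (hd xs))"
    by (rule rf_prim'[OF _ S3]) (rule rf_proj', simp)
  then show ?thesis
  proof (rule rf_cong')
    fix xs :: "nat list" assume "length xs = 2"
    then obtain a b where "xs = [a, b]" by (auto simp: length_Suc_conv numeral_2_eq_2)
    then show "rec_nat ((tl xs) ! 0) (\<lambda>y r. Suc ((y # r # tl xs) ! 1)) (hd xs) = xs!0 + xs!1"
    proof -
      have "rec_nat b (\<lambda>y. Suc) a' = a' + b" for a' by (induct a') auto
      then show ?thesis using \<open>xs = [a, b]\<close> by simp
    qed
  qed simp
qed

lemma rf_pred: "rf 1 (\<lambda>xs. xs!0 - 1)"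
proof -
  have "rf (Suc 0) (\<lambda>xs. rec_nat 0 (\<lambda>y r. (y # r # tl xs) ! 0) (hd xs))"
    by (rule rf_prim'[OF rf_const]) (rule rf_proj', simp)
  then show ?thesis
  proof (rule rf_cong')
    fix xs :: "nat list" assume "length xs = 1"
    then obtain a where "xs = [a]" by (auto simp: length_Suc_conv)
    then show "rec_nat 0 (\<lambda>y r. (y # r # tl xs) ! 0) (hd xs) = xs!0 - 1"
      by (cases a) auto
  qed simp
qed

lemma rf_sub: "rf 2 (\<lambda>xs. xs!0 - xs!1)"
proof -
  have "rf 3 (\<lambda>xs. xs!1 - 1)"
    by (rule rf_comp1[OF rf_pred]) (rule rf_proj', simp)
  then have S3: "rf (Suc (Suc (Suc 0))) (\<lambda>xs. xs!1 - 1)" unfolding numeral_3_eq_3 .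
  have "rf (Suc (Suc 0)) (\<lambda>xs. rec_nat ((tl xs) ! 0) (\<lambda>y r. (y # r # tl xs) ! 1 - 1) (hd xs))"
    by (rule rf_prim'[OF _ S3]) (rule rf_proj', simp)
  then have A: "rf 2 (\<lambda>xs. xs!1 - xs!0)"
  proof (rule rf_cong')
    fix xs :: "nat list" assume "length xs = 2"
    then obtain a b where ab: "xs = [a, b]" by (auto simp: length_Suc_conv numeral_2_eq_2)
    have "rec_nat b (\<lambda>y r. r - 1) a' = b - a'" for a' by (induct a') auto
    then show "rec_nat ((tl xs) ! 0) (\<lambda>y r. (y # r # tl xs) ! 1 - 1) (hd xs) = xs!1 - xs!0"
      using ab by simp
  qed simp
  show ?thesis
    using rf_comp2[OF A rf_proj'[of 1 2] rf_proj'[of 0 2]] by simp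
qed

lemma rf_tri: "rf 1 (\<lambda>xs. triangle (xs!0))"
proof -
  have "rf 2 (\<lambda>xs. xs!1 + Suc (xs!0))"
    apply (rule rf_comp2[OF rf_add])
     apply (rule rf_proj', simp)
    apply (rule rf_comp1[OF rf_succ'])
    apply (rule rf_proj', simp)
    done
  then have S2: "rf (Suc (Suc 0)) (\<lambda>xs. xs!1 + Suc (xs!0))" unfolding numeral_2_eq_2 .
  have "rf (Suc 0) (\<lambda>xs. rec_nat 0 (\<lambda>y r. (y # r # tl xs) ! 1 + Suc ((y # r # tl xs) ! 0)) (hd xs))"
    by (rule rf_prim'[OF rf_const S2])
  then show ?thesis
  proof (rule rf_cong')
    fix xs :: "nat list" assume "length xs = 1"
    then obtain a where ab: "xs = [a]" by (auto simp: length_Suc_conv)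
    have "rec_nat 0 (\<lambda>y r. r + Suc y) a' = triangle a'" for a' by (induct a') auto
    then show "rec_nat 0 (\<lambda>y r. (y # r # tl xs) ! 1 + Suc ((y # r # tl xs) ! 0)) (hd xs) = triangle (xs!0)"
      using ab by simp
  qed simp
qed

lemma rf_pe: "rf 2 (\<lambda>xs. prod_encode (xs!0, xs!1))"
proof -
  have "rf 2 (\<lambda>xs. triangle (xs!0 + xs!1) + xs!0)"
    apply (rule rf_comp2[OF rf_add])
     apply (rule rf_comp1[OF rf_tri])
     apply (rule rf_comp2[OF rf_add])
      apply (rule rf_proj', simp)
     apply (rule rf_proj', simp)
    apply (rule rf_proj', simp)
    done
  then show ?thesis by (simp add: prod_encode_def)
qed

definition Sdec :: "nat \<Rightarrow> nat" where "Sdec c = (LEAST s. 1 - (triangle (Suc s) - c) = 0)"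

lemma rf_Sdec: "rf 1 (\<lambda>xs. Sdec (xs!0))"
proof -
  have "rf 2 (\<lambda>xs. 1 - (triangle (Suc (xs!0)) - xs!1))"
    apply (rule rf_comp2[OF rf_sub])
     apply (rule rf_const)
    apply (rule rf_comp2[OF rf_sub])
     apply (rule rf_comp1[OF rf_tri])
     apply (rule rf_comp1[OF rf_succ'])
     apply (rule rf_proj', simp)
    apply (rule rf_proj', simp)
    done
  then have S2: "rf (Suc 1) (\<lambda>xs. 1 - (triangle (Suc (xs!0)) - xs!1))" by (simp only: One_nat_def numeral_2_eq_2)
  have "rf 1 (\<lambda>xs. LEAST y. 1 - (triangle (Suc ((y#xs)!0)) - (y#xs)!1) = 0)"
  proof (rule rf_mu'[OF S2], intro allI impI)
    fix xs :: "nat list" assume "length xs = 1"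
    have "xs!0 < triangle (Suc (xs!0))" by (induct "xs!0") auto
    then show "\<exists>y. 1 - (triangle (Suc ((y#xs)!0)) - (y#xs)!1) = 0"
      by (intro exI[of _ "xs!0"]) simp
  qed
  then show ?thesis by (simp add: Sdec_def)
qed

lemma one_minus_eq0: "((1::nat) - (t - c) = 0) = (c < t)" by auto

lemma Sdec_pe: "Sdec (prod_encode (a, b)) = a + b"
  unfolding Sdec_def prod_encode_def one_minus_eq0 case_prod_conv
proof (rule Least_equality)
  show "triangle (a + b) + a < triangle (Suc (a + b))" by simp
  fix y assume "triangle (a + b) + a < triangle (Suc y)"
  show "a + b \<le> y"
  proof (rule ccontr)
    assume "\<not> a + b \<le> y"
    then have "Suc y \<le> a + b" by simp
    then have "triangle (Suc y) \<le> triangle (a + b)"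
      by (induct rule: dec_induct) auto
    then show False using \<open>triangle (a + b) + a < triangle (Suc y)\<close> by simp
  qed
qed

definition dfst :: "nat \<Rightarrow> nat" where "dfst c = c - triangle (Sdec c)"
definition dsnd :: "nat \<Rightarrow> nat" where "dsnd c = Sdec c - dfst c"

lemma dfst_pe [simp]: "dfst (prod_encode (a, b)) = a"
  by (simp add: dfst_def Sdec_pe) (simp add: prod_encode_def)
lemma dsnd_pe [simp]: "dsnd (prod_encode (a, b)) = b"
  by (simp add: dsnd_def Sdec_pe)

lemma rf_dfst: "rf 1 (\<lambda>xs. dfst (xs!0))"
  unfolding dfst_def
  apply (rule rf_comp2[OF rf_sub])
   apply (rule rf_proj', simp)
  apply (rule rf_comp1[OF rf_tri])
  apply (rule rf_Sdec)
  done

lemma rf_dsnd: "rf 1 (\<lambda>xs. dsnd (xs!0))"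
  unfolding dsnd_def
  apply (rule rf_comp2[OF rf_sub])
   apply (rule rf_Sdec)
  apply (rule rf_dfst)
  done

lemma rf_suc_comp: "rf n g \<Longrightarrow> rf n (\<lambda>xs. Suc (g xs))"
  by (rule rf_comp1[OF rf_succ'])

lemma rf_pe_comp: "rf n g1 \<Longrightarrow> rf n g2 \<Longrightarrow> rf n (\<lambda>xs. prod_encode (g1 xs, g2 xs))"
  by (rule rf_comp2[OF rf_pe])

lemma rf_dfst_comp: "rf n g \<Longrightarrow> rf n (\<lambda>xs. dfst (g xs))"
  by (rule rf_comp1[OF rf_dfst])

lemma rf_dsnd_comp: "rf n g \<Longrightarrow> rf n (\<lambda>xs. dsnd (g xs))"
  by (rule rf_comp1[OF rf_dsnd])

definition Rf :: "nat \<Rightarrow> nat \<Rightarrow> nat" where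
  "Rf a c = prod_encode (prod_encode (Suc (prod_encode (a, dfst (dfst c))), dsnd (dfst c)),
              Suc (prod_encode (a, dsnd c)))"

definition Ru :: "nat \<Rightarrow> nat \<Rightarrow> nat" where
  "Ru a c = prod_encode (dfst c, Rf a (dsnd c))"

lemma rf_Rf_comp: "rf n g \<Longrightarrow> rf n (\<lambda>xs. Rf a (g xs))"
  unfolding Rf_def
  by (intro rf_pe_comp rf_suc_comp rf_dfst_comp rf_dsnd_comp rf_const)

lemma rf_Rf: "rf 1 (\<lambda>xs. Rf a (xs!0))"
  by (rule rf_Rf_comp) (rule rf_proj', simp)

lemma rf_Ru: "rf 1 (\<lambda>xs. Ru a (xs!0))"
  unfolding Ru_def
  by (intro rf_pe_comp rf_Rf_comp rf_dfst_comp rf_dsnd_comp) (rule rf_proj', simp)+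

lemma decidable_reduce:
  assumes "decidable P" "rf 1 (\<lambda>xs. r (xs!0))"
    and "\<And>c. c \<in> fst Q \<Longrightarrow> r c \<in> fst P \<and> (r c \<in> snd P \<longleftrightarrow> c \<in> snd Q)"
  shows "decidable Q"
proof -
  obtain f where f: "recfn 1 f" "\<forall>c\<in>fst P. (f [c] = 0 \<longleftrightarrow> c \<in> snd P)"
    using assms(1) unfolding decidable_def by blast
  have "rf 1 (\<lambda>xs. f [xs!0])"
    unfolding rf_def
  proof (intro exI[of _ f] conjI allI impI)
    fix xs :: "nat list" assume "length xs = 1"
    then show "f xs = f [xs!0]" by (auto simp: length_Suc_conv)
  qed (rule f(1))
  from rf_comp1[OF this assms(2)] obtain g where g: "recfn 1 g" "\<forall>xs. length xs = 1 \<longrightarrow> g xs = f [r (xs!0)]"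
    unfolding rf_def by blast
  show ?thesis unfolding decidable_def
  proof (intro exI[of _ g] conjI ballI)
    fix c assume "c \<in> fst Q"
    then show "(g [c] = 0) = (c \<in> snd Q)" using g f assms(3) by auto
  qed (rule g(1))
qed

lemma decidable_same:
  assumes "decidable P"
    and "\<And>c. c \<in> fst Q \<Longrightarrow> c \<in> fst P \<and> (c \<in> snd P \<longleftrightarrow> c \<in> snd Q)"
  shows "decidable Q"
  using assms unfolding decidable_def by metis



locale sdpctx = group G for G (structure) +
  fixes \<psi>
  assumes psi_iso: "\<psi> \<in> iso G G"
begin

definition "\<sigma> = inv_into (carrier G) \<psi>"
abbreviation "\<alpha> \<equiv> autpow G \<psi>"

lemma psi_hom: "\<psi> \<in> hom G G" using psi_iso by (simp add: iso_def)
lemma sigma_iso: "\<sigma> \<in> iso G G" unfolding \<sigma>_def by (rule iso_set_sym[OF psi_iso])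
lemma sigma_hom: "\<sigma> \<in> hom G G" using sigma_iso by (simp add: iso_def)

lemma psi_closed [simp]: "x \<in> carrier G \<Longrightarrow> \<psi> x \<in> carrier G"
  by (rule hom_in_carrier[OF psi_hom])
lemma sigma_closed [simp]: "x \<in> carrier G \<Longrightarrow> \<sigma> x \<in> carrier G"
  by (rule hom_in_carrier[OF sigma_hom])
lemma psi_bij: "bij_betw \<psi> (carrier G) (carrier G)" using psi_iso by (simp add: iso_def)
lemma psi_sigma [simp]: "x \<in> carrier G \<Longrightarrow> \<psi> (\<sigma> x) = x"
  unfolding \<sigma>_def by (rule bij_betw_inv_into_right[OF psi_bij])
lemma sigma_psi [simp]: "x \<in> carrier G \<Longrightarrow> \<sigma> (\<psi> x) = x"
  unfolding \<sigma>_def by (rule bij_betw_inv_into_left[OF psi_bij])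

lemma funpow_hom: "f \<in> hom G G \<Longrightarrow> (f ^^ n) \<in> hom G G"
  by (induction n) (auto simp: hom_def Pi_def)

lemma alpha_hom: "\<alpha> k \<in> hom G G"
  unfolding autpow_def using funpow_hom[OF psi_hom] funpow_hom[OF sigma_hom]
  by (simp add: \<sigma>_def)

lemma alpha_gh: "group_hom G G (\<alpha> k)"
  by (simp add: group_hom_def group_hom_axioms_def alpha_hom is_group)

lemma alpha_closed [simp]: "x \<in> carrier G \<Longrightarrow> \<alpha> k x \<in> carrier G"
  by (rule hom_in_carrier[OF alpha_hom])
lemma alpha_mult [simp]: "x \<in> carrier G \<Longrightarrow> y \<in> carrier G \<Longrightarrow> \<alpha> k (x \<otimes> y) = \<alpha> k x \<otimes> \<alpha> k y"
  by (rule hom_mult[OF alpha_hom])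
lemma alpha_inv [simp]: "x \<in> carrier G \<Longrightarrow> \<alpha> k (inv x) = inv (\<alpha> k x)"
  by (rule group_hom.hom_inv[OF alpha_gh])
lemma alpha_one [simp]: "\<alpha> k \<one> = \<one>"
  by (rule group_hom.hom_one[OF alpha_gh])
lemma alpha_0 [simp]: "\<alpha> 0 x = x" by (simp add: autpow_def)
lemma alpha_1: "\<alpha> 1 x = \<psi> x" by (simp add: autpow_def)
lemma alpha_m1: "\<alpha> (-1) x = \<sigma> x" by (simp add: autpow_def \<sigma>_def)

lemma alpha_succ: "x \<in> carrier G \<Longrightarrow> \<alpha> (k + 1) x = \<psi> (\<alpha> k x)"
proof (cases "0 \<le> k")
  case True
  then have "nat (k + 1) = Suc (nat k)" by simp
  then show ?thesis using True by (simp add: autpow_def)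
next
  case False
  assume x: "x \<in> carrier G"
  have "nat (- k) = Suc (nat (- (k + 1)))" using False by simp
  then have "\<alpha> k x = \<sigma> ((\<sigma> ^^ nat (- (k + 1))) x)" using False by (simp add: autpow_def \<sigma>_def)
  moreover have "\<alpha> (k + 1) x = (\<sigma> ^^ nat (- (k + 1))) x"
    using False by (cases "k + 1 = 0") (auto simp: autpow_def \<sigma>_def)
  moreover have "(\<sigma> ^^ nat (- (k + 1))) x \<in> carrier G"
    using hom_in_carrier[OF funpow_hom[OF sigma_hom] x] .
  ultimately show ?thesis by simp
qed

lemma alpha_pred: "x \<in> carrier G \<Longrightarrow> \<alpha> (k - 1) x = \<sigma> (\<alpha> k x)"
  using alpha_succ[of x "k - 1"] by simp

lemma alpha_add: "x \<in> carrier G \<Longrightarrow> \<alpha> (k + l) x = \<alpha> k (\<alpha> l x)"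
proof (induction k rule: int_induct[where k=0])
  case base then show ?case by simp
next
  case (step1 i)
  then show ?case using alpha_succ[of "\<alpha> l x" i] alpha_succ[of x "i + l"]
    by (simp add: algebra_simps)
next
  case (step2 i)
  then show ?case using alpha_pred[of "\<alpha> l x" i] alpha_pred[of x "i + l"]
    by (simp add: algebra_simps)
qed


abbreviation "P \<equiv> sdp G \<psi>"

lemma P_carrier [simp]: "carrier P = carrier G \<times> UNIV" by (simp add: sdp_def)
lemma P_mult [simp]: "(a, k) \<otimes>\<^bsub>P\<^esub> (b, l) = (a \<otimes> \<alpha> (- k) b, k + l)" by (simp add: sdp_def)
lemma P_one [simp]: "\<one>\<^bsub>P\<^esub> = (\<one>, 0)" by (simp add: sdp_def)

lemma P_group: "group P"
proof (rule groupI)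
  fix x y assume "x \<in> carrier P" "y \<in> carrier P"
  then show "x \<otimes>\<^bsub>P\<^esub> y \<in> carrier P" by (cases x, cases y) simp
next
  show "\<one>\<^bsub>P\<^esub> \<in> carrier P" by simp
next
  fix x y z assume "x \<in> carrier P" "y \<in> carrier P" "z \<in> carrier P"
  then show "x \<otimes>\<^bsub>P\<^esub> y \<otimes>\<^bsub>P\<^esub> z = x \<otimes>\<^bsub>P\<^esub> (y \<otimes>\<^bsub>P\<^esub> z)"
    by (cases x, cases y, cases z) (simp add: m_assoc alpha_add[symmetric] add.assoc)
next
  fix x assume "x \<in> carrier P"
  then show "\<one>\<^bsub>P\<^esub> \<otimes>\<^bsub>P\<^esub> x = x" by (cases x) simp
next
  fix x assume "x \<in> carrier P"
  then obtain w k where x: "x = (w, k)" "w \<in> carrier G" by (cases x) auto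
  have "(\<alpha> k (inv w), - k) \<otimes>\<^bsub>P\<^esub> (w, k) = \<one>\<^bsub>P\<^esub>"
    using x(2) by (simp flip: alpha_mult)
  moreover have "(\<alpha> k (inv w), - k) \<in> carrier P" using x(2) by simp
  ultimately show "\<exists>y\<in>carrier P. y \<otimes>\<^bsub>P\<^esub> x = \<one>\<^bsub>P\<^esub>" unfolding x(1) by blast
qed

lemma P_inv [simp]: "w \<in> carrier G \<Longrightarrow> inv\<^bsub>P\<^esub> (w, k) = (\<alpha> k (inv w), - k)"
  by (rule group.inv_equality[OF P_group]) (simp_all flip: alpha_mult)

lemma P_conj: "w \<in> carrier G \<Longrightarrow> g \<in> carrier G \<Longrightarrow>
  inv\<^bsub>P\<^esub> (w, k) \<otimes>\<^bsub>P\<^esub> (g, j) \<otimes>\<^bsub>P\<^esub> (w, k) = (\<alpha> k (inv w) \<otimes> \<alpha> k g \<otimes> \<alpha> (k - j) w, j)"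
  by simp

definition "\<iota> = (\<lambda>g. (g, 0::int))"

lemma iota_gh: "group_hom G P \<iota>"
  unfolding group_hom_def group_hom_axioms_def
  by (auto simp: is_group P_group \<iota>_def intro!: homI)

end

lemma eval_word_Cons: "eval_word H hs (l # w) =
  (if even l then hs ! (l div 2) else inv\<^bsub>H\<^esub> (hs ! (l div 2))) \<otimes>\<^bsub>H\<^esub> eval_word H hs w"
  by (simp add: eval_word_def)

lemma eval_word_Nil: "eval_word H hs [] = \<one>\<^bsub>H\<^esub>"
  by (simp add: eval_word_def)

lemma word_ok_Cons: "word_ok n (l # w) \<longleftrightarrow> l < 2 * n \<and> word_ok n w"
  by (simp add: word_ok_def)

lemma word_ok_Suc: "word_ok n w \<Longrightarrow> word_ok (Suc n) w"
  by (auto simp: word_ok_def)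

context sdpctx
begin

lemma gens_P_nth: "i < length gs \<Longrightarrow> sdp_gens G gs ! i = (gs ! i, 0)"
  by (simp add: sdp_gens_def nth_append)

lemma gens_P_last: "sdp_gens G gs ! length gs = (\<one>, 1)"
  by (simp add: sdp_gens_def nth_append)

lemma eval_G_closed:
  assumes "set gs \<subseteq> carrier G" "word_ok (length gs) w"
  shows "eval_word G gs w \<in> carrier G"
  using assms(2)
proof (induction w)
  case Nil then show ?case by (simp add: eval_word_Nil)
next
  case (Cons l w)
  then have "l div 2 < length gs" "word_ok (length gs) w" by (auto simp: word_ok_Cons)
  then have "gs ! (l div 2) \<in> carrier G" using assms(1) by auto
  then show ?case using Cons \<open>word_ok (length gs) w\<close> by (simp add: eval_word_Cons)
qed

lemma eval_P:
  assumes "set gs \<subseteq> carrier G" "word_ok (length gs) w"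
  shows "eval_word P (sdp_gens G gs) w = (eval_word G gs w, 0)"
  using assms(2)
proof (induction w)
  case Nil then show ?case by (simp add: eval_word_Nil)
next
  case (Cons l w)
  then have l: "l div 2 < length gs" and w: "word_ok (length gs) w" by (auto simp: word_ok_Cons)
  then have g: "gs ! (l div 2) \<in> carrier G" using assms(1) by auto
  have e: "eval_word G gs w \<in> carrier G" by (rule eval_G_closed[OF assms(1) w])
  show ?case using Cons.IH[OF w] g e l by (simp add: eval_word_Cons gens_P_nth)
qed

lemma eval_P_t:
  assumes "set gs \<subseteq> carrier G" "word_ok (length gs) w"
  shows "eval_word P (sdp_gens G gs) (2 * length gs # w) = (\<sigma> (eval_word G gs w), 1)"
  using eval_P[OF assms] eval_G_closed[OF assms]
  by (simp add: eval_word_Cons gens_P_last alpha_m1)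

end

context sdpctx
begin

lemma gen_sub: "set gs \<subseteq> carrier G \<Longrightarrow> \<forall>w\<in>set Ks. word_ok (length gs) w \<Longrightarrow>
   eval_word G gs ` set Ks \<subseteq> carrier G"
  using eval_G_closed by blast

lemma gen_P:
  assumes "set gs \<subseteq> carrier G" "\<forall>w\<in>set Ks. word_ok (length gs) w"
  shows "generate P (eval_word P (sdp_gens G gs) ` set Ks) = \<iota> ` generate G (eval_word G gs ` set Ks)"
proof -
  have "eval_word P (sdp_gens G gs) ` set Ks = \<iota> ` (eval_word G gs ` set Ks)"
    using eval_P[OF assms(1)] assms(2) by (force simp: \<iota>_def)
  then show ?thesis
    using group_hom.generate_img[OF iota_gh gen_sub[OF assms]] by simp
qed

lemma Kset_sub:
  assumes "set gs \<subseteq> carrier G" "K_ok cls (length gs) y Ks"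
  shows "K_set cls G gs y Ks \<subseteq> carrier G"
proof -
  have S: "eval_word G gs ` set Ks \<subseteq> carrier G" using gen_sub assms by (simp add: K_ok_def)
  have y: "eval_word G gs y \<in> carrier G" using eval_G_closed assms by (simp add: K_ok_def)
  show ?thesis using generate_incl[OF S] l_coset_subset_G[OF generate_incl[OF S] y]
    by (simp add: K_set_def)
qed

lemma Kset_P:
  assumes "set gs \<subseteq> carrier G" "K_ok cls (length gs) y Ks"
  shows "K_set cls P (sdp_gens G gs) y Ks = \<iota> ` K_set cls G gs y Ks"
proof (cases "cls = FG")
  case True
  then show ?thesis using gen_P[OF assms(1)] assms(2) by (simp add: K_set_def K_ok_def)
next
  case False
  have S: "eval_word G gs ` set Ks \<subseteq> carrier G" using gen_sub assms by (simp add: K_ok_def)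
  have y: "eval_word G gs y \<in> carrier G" using eval_G_closed assms by (simp add: K_ok_def)
  have ey: "eval_word P (sdp_gens G gs) y = \<iota> (eval_word G gs y)"
    using eval_P assms by (simp add: K_ok_def \<iota>_def)
  have "\<iota> (eval_word G gs y) <#\<^bsub>P\<^esub> \<iota> ` H = \<iota> ` (eval_word G gs y <# H)" if "H \<subseteq> carrier G" for H
    using that by (auto simp: l_coset_def \<iota>_def)
  then show ?thesis using False gen_P[OF assms(1)] assms(2) ey generate_incl[OF S]
    by (simp add: K_set_def K_ok_def)
qed

lemma Kset_P_t:
  assumes "set gs \<subseteq> carrier G" "K_ok FGCoset (length gs) y Ks"
  shows "K_set FGCoset P (sdp_gens G gs) (2 * length gs # y) Ks = (\<lambda>q. (\<sigma> q, 1)) ` K_set FGCoset G gs y Ks"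
proof -
  have S: "eval_word G gs ` set Ks \<subseteq> carrier G" using gen_sub assms by (simp add: K_ok_def)
  have y: "eval_word G gs y \<in> carrier G" using eval_G_closed assms by (simp add: K_ok_def)
  have ey: "eval_word P (sdp_gens G gs) (2 * length gs # y) = (\<sigma> (eval_word G gs y), 1)"
    using eval_P_t assms by (simp add: K_ok_def)
  have "(\<sigma> (eval_word G gs y), 1) <#\<^bsub>P\<^esub> \<iota> ` H = (\<lambda>q. (\<sigma> q, 1)) ` (eval_word G gs y <# H)"
    if "H \<subseteq> carrier G" for H
  proof -
    have "\<sigma> (eval_word G gs y) \<otimes> \<alpha> (- 1) h = \<sigma> (eval_word G gs y \<otimes> h)" if "h \<in> H" for h
      using that \<open>H \<subseteq> carrier G\<close> y hom_mult[OF sigma_hom, of "eval_word G gs y" h] by (auto simp: alpha_m1)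
    then show ?thesis by (force simp: l_coset_def \<iota>_def)
  qed
  then show ?thesis using gen_P[OF assms(1)] assms(2) ey generate_incl[OF S]
    by (simp add: K_set_def K_ok_def)
qed

end

context sdpctx
begin

lemma alpha_cancel: "z \<in> carrier G \<Longrightarrow> \<alpha> k (\<alpha> (- k) z) = z"
  using alpha_add[of z k "- k"] by simp

lemma M1:
  assumes gs: "set gs \<subseteq> carrier G" and K: "K_ok cls (length gs) y Ks" and x: "word_ok (length gs) x"
  shows "gcp_pred cls P (sdp_gens G gs) y Ks x \<longleftrightarrow> brcp_pred cls G gs \<psi> y Ks x"
proof -
  define g where "g = eval_word G gs x"
  have g: "g \<in> carrier G" unfolding g_def by (rule eval_G_closed[OF gs x])
  have ex: "eval_word P (sdp_gens G gs) x = (g, 0)" unfolding g_def by (rule eval_P[OF gs x])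
  have KP: "K_set cls P (sdp_gens G gs) y Ks = \<iota> ` K_set cls G gs y Ks" by (rule Kset_P[OF gs K])
  show ?thesis
  proof
    assume "gcp_pred cls P (sdp_gens G gs) y Ks x"
    then obtain z where z: "z \<in> carrier P" "inv\<^bsub>P\<^esub> z \<otimes>\<^bsub>P\<^esub> (g, 0) \<otimes>\<^bsub>P\<^esub> z \<in> \<iota> ` K_set cls G gs y Ks"
      unfolding gcp_pred_def ex KP by blast
    obtain w k where wk: "z = (w, k)" "w \<in> carrier G" using z(1) by (cases z) auto
    have "(inv (\<alpha> k w) \<otimes> \<alpha> k g \<otimes> \<alpha> k w, 0) \<in> \<iota> ` K_set cls G gs y Ks"
      using z(2) P_conj[OF wk(2) g, of k 0] wk by simp
    then have "inv (\<alpha> k w) \<otimes> \<alpha> k g \<otimes> \<alpha> k w \<in> K_set cls G gs y Ks" by (auto simp: \<iota>_def)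
    moreover have "\<alpha> k w \<in> carrier G" using wk(2) by simp
    ultimately show "brcp_pred cls G gs \<psi> y Ks x" unfolding brcp_pred_def g_def[symmetric]
      by blast
  next
    assume "brcp_pred cls G gs \<psi> y Ks x"
    then obtain k z where z: "z \<in> carrier G" "inv z \<otimes> \<alpha> k g \<otimes> z \<in> K_set cls G gs y Ks"
      unfolding brcp_pred_def g_def by blast
    define w where "w = \<alpha> (- k) z"
    have w: "w \<in> carrier G" "\<alpha> k w = z" unfolding w_def using z(1) alpha_cancel by auto
    have "inv\<^bsub>P\<^esub> (w, k) \<otimes>\<^bsub>P\<^esub> (g, 0) \<otimes>\<^bsub>P\<^esub> (w, k) = \<iota> (inv z \<otimes> \<alpha> k g \<otimes> z)"
      using P_conj[OF w(1) g, of k 0] w by (simp add: \<iota>_def)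
    then have "inv\<^bsub>P\<^esub> (w, k) \<otimes>\<^bsub>P\<^esub> (g, 0) \<otimes>\<^bsub>P\<^esub> (w, k) \<in> \<iota> ` K_set cls G gs y Ks"
      using z(2) by simp
    moreover have "(w, k) \<in> carrier P" using w by simp
    ultimately show "gcp_pred cls P (sdp_gens G gs) y Ks x"
      unfolding gcp_pred_def ex KP by blast
  qed
qed

definition "tw a b \<longleftrightarrow> (\<exists>v\<in>carrier G. b = inv (\<psi> v) \<otimes> a \<otimes> v)"

lemma psi_inv: "v \<in> carrier G \<Longrightarrow> \<psi> (inv v) = inv (\<psi> v)"
  using alpha_inv[of v 1] by (simp add: alpha_1)
lemma psi_mult: "a \<in> carrier G \<Longrightarrow> b \<in> carrier G \<Longrightarrow> \<psi> (a \<otimes> b) = \<psi> a \<otimes> \<psi> b"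
  by (rule hom_mult[OF psi_hom])

lemma tw_refl: "a \<in> carrier G \<Longrightarrow> tw a a"
  unfolding tw_def by (intro bexI[of _ \<one>]) (auto simp: alpha_one[of 1, unfolded alpha_1])

lemma tw_trans: "a \<in> carrier G \<Longrightarrow> tw a b \<Longrightarrow> tw b c \<Longrightarrow> tw a c"
  unfolding tw_def
proof (elim bexE)
  fix v v' assume a: "a \<in> carrier G" and v: "v \<in> carrier G" "b = inv (\<psi> v) \<otimes> a \<otimes> v"
    and v': "v' \<in> carrier G" "c = inv (\<psi> v') \<otimes> b \<otimes> v'"
  have "c = inv (\<psi> (v \<otimes> v')) \<otimes> a \<otimes> (v \<otimes> v')"
    using a v v' by (simp add: psi_mult inv_mult_group m_assoc)
  then show "\<exists>v\<in>carrier G. c = inv (\<psi> v) \<otimes> a \<otimes> v" using v v' by blast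
qed

lemma tw_psi: "b \<in> carrier G \<Longrightarrow> tw b (\<psi> b)"
  unfolding tw_def
proof (intro bexI[of _ "inv b"])
  assume b: "b \<in> carrier G"
  show "\<psi> b = inv (\<psi> (inv b)) \<otimes> b \<otimes> inv b" using b by (simp add: psi_inv m_assoc)
qed simp

lemma tw_sigma: "b \<in> carrier G \<Longrightarrow> tw b (\<sigma> b)"
  unfolding tw_def
proof (intro bexI[of _ "\<sigma> b"])
  assume b: "b \<in> carrier G"
  show "\<sigma> b = inv (\<psi> (\<sigma> b)) \<otimes> b \<otimes> \<sigma> b" using b by simp
qed simp

lemma tw_alpha: assumes a: "a \<in> carrier G" shows "tw a (\<alpha> k a)"
proof (induction k rule: int_induct[where k=0])
  case base then show ?case using tw_refl a by simp
next
  case (step1 i)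
  have "tw a (\<psi> (\<alpha> i a))" using tw_trans[OF a step1(2) tw_psi[of "\<alpha> i a"]] a by simp
  then show ?case using alpha_succ[OF a, of i] by simp
next
  case (step2 i)
  have "tw a (\<sigma> (\<alpha> i a))" using tw_trans[OF a step2(2) tw_sigma[of "\<alpha> i a"]] a by simp
  then show ?case using alpha_pred[OF a, of i] by simp
qed

end

context sdpctx
begin

lemma psiT:
  assumes w: "w \<in> carrier G" and e: "e \<in> carrier G"
  shows "\<psi> (\<alpha> k (inv w) \<otimes> \<alpha> k (\<sigma> e) \<otimes> \<alpha> (k - 1) w) = inv (\<psi> (\<alpha> k w)) \<otimes> \<alpha> k e \<otimes> \<alpha> k w"
proof -
  have 1: "\<psi> (\<alpha> k (inv w)) = inv (\<psi> (\<alpha> k w))"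
  proof -
    have "\<psi> (\<alpha> k (inv w)) = \<psi> (inv (\<alpha> k w))" using w by simp
    also have "\<dots> = inv (\<psi> (\<alpha> k w))" by (rule psi_inv) (simp add: w)
    finally show ?thesis .
  qed
  have 2: "\<psi> (\<alpha> k (\<sigma> e)) = \<alpha> k e"
  proof -
    have "\<psi> (\<alpha> k (\<sigma> e)) = \<alpha> (k + 1) (\<alpha> (- 1) e)" using alpha_succ[of "\<sigma> e" k] e by (simp add: alpha_m1)
    also have "\<dots> = \<alpha> (k + 1 + - 1) e" using alpha_add[OF e, of "k + 1" "- 1"] by simp
    finally show ?thesis by simp
  qed
  have 3: "\<psi> (\<alpha> (k - 1) w) = \<alpha> k w" using alpha_succ[OF w, of "k - 1"] by simp
  show ?thesis using w e by (simp add: psi_mult psi_inv 2 3)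
qed

lemma M2:
  assumes gs: "set gs \<subseteq> carrier G" and K: "K_ok FGCoset (length gs) y Ks" and x: "word_ok (length gs) x"
  shows "gcp_pred FGCoset P (sdp_gens G gs) (2 * length gs # y) Ks (2 * length gs # x)
     \<longleftrightarrow> tcp_pred FGCoset G gs \<psi> y Ks x"
proof -
  define e where "e = eval_word G gs x"
  define K' where "K' = K_set FGCoset G gs y Ks"
  have e: "e \<in> carrier G" unfolding e_def by (rule eval_G_closed[OF gs x])
  have ex: "eval_word P (sdp_gens G gs) (2 * length gs # x) = (\<sigma> e, 1)" unfolding e_def by (rule eval_P_t[OF gs x])
  have KP: "K_set FGCoset P (sdp_gens G gs) (2 * length gs # y) Ks = (\<lambda>q. (\<sigma> q, 1)) ` K'"
    unfolding K'_def by (rule Kset_P_t[OF gs K])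
  have Ksub: "K' \<subseteq> carrier G" unfolding K'_def by (rule Kset_sub[OF gs K])
  have key: "inv\<^bsub>P\<^esub> (w, k) \<otimes>\<^bsub>P\<^esub> (\<sigma> e, 1) \<otimes>\<^bsub>P\<^esub> (w, k) \<in> (\<lambda>q. (\<sigma> q, 1)) ` K'
     \<longleftrightarrow> inv (\<psi> (\<alpha> k w)) \<otimes> \<alpha> k e \<otimes> \<alpha> k w \<in> K'" if w: "w \<in> carrier G" for w k
  proof -
    define T where "T = \<alpha> k (inv w) \<otimes> \<alpha> k (\<sigma> e) \<otimes> \<alpha> (k - 1) w"
    have T: "T \<in> carrier G" unfolding T_def using w e by simp
    have conj: "inv\<^bsub>P\<^esub> (w, k) \<otimes>\<^bsub>P\<^esub> (\<sigma> e, 1) \<otimes>\<^bsub>P\<^esub> (w, k) = (T, 1)"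
      unfolding T_def using P_conj[OF w sigma_closed[OF e], of k 1] by simp
    have "(T, 1) \<in> (\<lambda>q. (\<sigma> q, 1)) ` K' \<longleftrightarrow> \<psi> T \<in> K'"
    proof
      assume "(T, 1) \<in> (\<lambda>q. (\<sigma> q, 1)) ` K'"
      then obtain q where "q \<in> K'" "T = \<sigma> q" by auto
      then show "\<psi> T \<in> K'" using Ksub by auto
    next
      assume "\<psi> T \<in> K'"
      moreover have "T = \<sigma> (\<psi> T)" using T by simp
      ultimately show "(T, 1) \<in> (\<lambda>q. (\<sigma> q, 1)) ` K'" by blast
    qed
    then show ?thesis using conj psiT[OF w e, of k] unfolding T_def by simp
  qed
  show ?thesis
  proof
    assume "gcp_pred FGCoset P (sdp_gens G gs) (2 * length gs # y) Ks (2 * length gs # x)"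
    then obtain z where z: "z \<in> carrier P" "inv\<^bsub>P\<^esub> z \<otimes>\<^bsub>P\<^esub> (\<sigma> e, 1) \<otimes>\<^bsub>P\<^esub> z \<in> (\<lambda>q. (\<sigma> q, 1)) ` K'"
      unfolding gcp_pred_def ex KP by blast
    obtain w k where wk: "z = (w, k)" "w \<in> carrier G" using z(1) by (cases z) auto
    define u where "u = \<alpha> k w"
    have u: "u \<in> carrier G" unfolding u_def using wk by simp
    have in1: "inv (\<psi> u) \<otimes> \<alpha> k e \<otimes> u \<in> K'" using key[OF wk(2)] z(2) wk(1) unfolding u_def by simp
    obtain v where v: "v \<in> carrier G" "\<alpha> k e = inv (\<psi> v) \<otimes> e \<otimes> v" using tw_alpha[OF e, of k] unfolding tw_def by blast
    have "inv (\<psi> u) \<otimes> \<alpha> k e \<otimes> u = inv (\<psi> (v \<otimes> u)) \<otimes> e \<otimes> (v \<otimes> u)"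
      using u v e by (simp add: psi_mult inv_mult_group m_assoc)
    then have "inv (\<psi> (v \<otimes> u)) \<otimes> e \<otimes> (v \<otimes> u) \<in> K'" using in1 by simp
    moreover have "v \<otimes> u \<in> carrier G" using u v by simp
    ultimately show "tcp_pred FGCoset G gs \<psi> y Ks x" unfolding tcp_pred_def e_def[symmetric] K'_def[symmetric]
      by blast
  next
    assume "tcp_pred FGCoset G gs \<psi> y Ks x"
    then obtain z where z: "z \<in> carrier G" "inv (\<psi> z) \<otimes> e \<otimes> z \<in> K'"
      unfolding tcp_pred_def e_def[symmetric] K'_def[symmetric] by blast
    have "inv\<^bsub>P\<^esub> (z, 0) \<otimes>\<^bsub>P\<^esub> (\<sigma> e, 1) \<otimes>\<^bsub>P\<^esub> (z, 0) \<in> (\<lambda>q. (\<sigma> q, 1)) ` K'"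
      using key[OF z(1), of 0] z(2) by simp
    moreover have "(z, 0) \<in> carrier P" using z by simp
    ultimately show "gcp_pred FGCoset P (sdp_gens G gs) (2 * length gs # y) Ks (2 * length gs # x)"
      unfolding gcp_pred_def ex KP by blast
  qed
qed

end


lemma enc_words_inj: "enc_words Ks = enc_words Ks' \<Longrightarrow> Ks = Ks'"
  unfolding enc_words_def
  by (metis inj_list_encode inj_on_eq_iff UNIV_I map_injective inj_list_encode)

lemma K_code_inj:
  assumes "K_ok cls m y Ks" "K_ok cls m' y' Ks'" "K_code cls y Ks = K_code cls y' Ks'"
  shows "y = y' \<and> Ks = Ks'"
proof (cases "cls = FG")
  case True then show ?thesis using assms enc_words_inj by (auto simp: K_ok_def K_code_def)
next
  case False
  then have "list_encode y = list_encode y'" "enc_words Ks = enc_words Ks'" using assms(3) by (auto simp: K_code_def)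
  then show ?thesis using enc_words_inj by (metis list_encode_inverse)
qed

lemma fixed_mem:
  assumes "K_ok cls m y Ks" "word_ok m x"
  shows "prod_encode (K_code cls y Ks, list_encode x) \<in> fst (fixed_problem cls m Pr)"
    and "prod_encode (K_code cls y Ks, list_encode x) \<in> snd (fixed_problem cls m Pr) \<longleftrightarrow> Pr y Ks x"
proof -
  show "prod_encode (K_code cls y Ks, list_encode x) \<in> fst (fixed_problem cls m Pr)"
    using assms unfolding fixed_problem_def by auto
  show "prod_encode (K_code cls y Ks, list_encode x) \<in> snd (fixed_problem cls m Pr) \<longleftrightarrow> Pr y Ks x"
  proof
    assume "prod_encode (K_code cls y Ks, list_encode x) \<in> snd (fixed_problem cls m Pr)"
    then obtain y' Ks' x' where h: "prod_encode (K_code cls y Ks, list_encode x) = prod_encode (K_code cls y' Ks', list_encode x')"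
      "K_ok cls m y' Ks'" "Pr y' Ks' x'" unfolding fixed_problem_def by auto
    then have "y = y' \<and> Ks = Ks'" using K_code_inj[OF assms(1) h(2)] by simp
    moreover have "x = x'" using h(1) by (metis list_encode_inverse prod_encode_eq prod.inject)
    ultimately show "Pr y Ks x" using h by simp
  next
    assume "Pr y Ks x"
    then show "prod_encode (K_code cls y Ks, list_encode x) \<in> snd (fixed_problem cls m Pr)"
      using assms unfolding fixed_problem_def by auto
  qed
qed

lemma unif_mem:
  assumes "\<forall>w\<in>set ps. word_ok (length gs) w" "\<exists>\<psi>. aut_given G gs ps \<psi>" "K_ok cls m y Ks" "word_ok m x"
  shows "prod_encode (enc_words ps, prod_encode (K_code cls y Ks, list_encode x)) \<in> fst (uniform_problem cls G gs m Pr)"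
    and "prod_encode (enc_words ps, prod_encode (K_code cls y Ks, list_encode x)) \<in> snd (uniform_problem cls G gs m Pr)
         \<longleftrightarrow> (\<exists>\<psi>. aut_given G gs ps \<psi> \<and> Pr \<psi> y Ks x)"
proof -
  show "prod_encode (enc_words ps, prod_encode (K_code cls y Ks, list_encode x)) \<in> fst (uniform_problem cls G gs m Pr)"
    unfolding uniform_problem_def fst_conv mem_Collect_eq
    apply (rule exI[of _ ps], rule exI[of _ y], rule exI[of _ Ks], rule exI[of _ x])
    using assms by simp
  show "prod_encode (enc_words ps, prod_encode (K_code cls y Ks, list_encode x)) \<in> snd (uniform_problem cls G gs m Pr)
         \<longleftrightarrow> (\<exists>\<psi>. aut_given G gs ps \<psi> \<and> Pr \<psi> y Ks x)"
  proof
    assume "prod_encode (enc_words ps, prod_encode (K_code cls y Ks, list_encode x)) \<in> snd (uniform_problem cls G gs m Pr)"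
    then obtain ps' y' Ks' x' where h: "prod_encode (enc_words ps, prod_encode (K_code cls y Ks, list_encode x))
        = prod_encode (enc_words ps', prod_encode (K_code cls y' Ks', list_encode x'))"
      "K_ok cls m y' Ks'" "\<exists>\<psi>. aut_given G gs ps' \<psi> \<and> Pr \<psi> y' Ks' x'" unfolding uniform_problem_def snd_conv mem_Collect_eq by blast
    then have "y = y' \<and> Ks = Ks'" using K_code_inj[OF assms(3) h(2)] by simp
    moreover have "x = x'" using h(1) by (metis list_encode_inverse prod_encode_eq prod.inject)
    moreover have "ps = ps'" using h(1) enc_words_inj by auto
    ultimately show "\<exists>\<psi>. aut_given G gs ps \<psi> \<and> Pr \<psi> y Ks x" using h by simp
  next
    assume "\<exists>\<psi>. aut_given G gs ps \<psi> \<and> Pr \<psi> y Ks x"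
    then show "prod_encode (enc_words ps, prod_encode (K_code cls y Ks, list_encode x)) \<in> snd (uniform_problem cls G gs m Pr)"
      unfolding uniform_problem_def snd_conv mem_Collect_eq
      apply -
      apply (rule exI[of _ ps], rule exI[of _ y], rule exI[of _ Ks], rule exI[of _ x])
      using assms by simp
  qed
qed

lemma K_ok_Suc: "K_ok cls n y Ks \<Longrightarrow> K_ok cls (Suc n) y Ks"
  unfolding K_ok_def using word_ok_Suc by blast

lemma word_ok_t: "word_ok n w \<Longrightarrow> word_ok (Suc n) (2 * n # w)"
  by (auto simp: word_ok_def)

lemma K_ok_t: "K_ok FGCoset n y Ks \<Longrightarrow> K_ok FGCoset (Suc n) (2 * n # y) Ks"
  unfolding K_ok_def using word_ok_t word_ok_Suc by blast

lemma Rf_code: "Rf a (prod_encode (K_code FGCoset y Ks, list_encode x)) =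
   prod_encode (K_code FGCoset (a # y) Ks, list_encode (a # x))"
  by (simp add: Rf_def K_code_def)

lemma Ru_code: "Ru a (prod_encode (e, prod_encode (K_code FGCoset y Ks, list_encode x))) =
   prod_encode (e, prod_encode (K_code FGCoset (a # y) Ks, list_encode (a # x)))"
  by (simp add: Ru_def Rf_code)

lemma sdpctx_I: "group G \<Longrightarrow> \<psi> \<in> iso G G \<Longrightarrow> sdpctx G \<psi>"
  by (simp add: sdpctx_def sdpctx_axioms_def)

lemma part_fixed_br:
  assumes G: "group G" "set gs \<subseteq> carrier G" "\<phi> \<in> iso G G"
    and d: "decidable (GCP_fixed cls G gs \<phi>)"
  shows "decidable (GBrCP_fixed cls G gs \<phi>)"
proof (rule decidable_same[OF d])
  interpret sdpctx G \<phi> by (rule sdpctx_I[OF G(1,3)])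
  fix c assume "c \<in> fst (GBrCP_fixed cls G gs \<phi>)"
  then obtain y Ks x where c: "c = prod_encode (K_code cls y Ks, list_encode x)"
    "K_ok cls (length gs) y Ks" "word_ok (length gs) x"
    unfolding GBrCP_fixed_def fixed_problem_def by auto
  show "c \<in> fst (GCP_fixed cls G gs \<phi>) \<and> (c \<in> snd (GCP_fixed cls G gs \<phi>) \<longleftrightarrow> c \<in> snd (GBrCP_fixed cls G gs \<phi>))"
    unfolding GCP_fixed_def GBrCP_fixed_def c(1)
    using fixed_mem[OF K_ok_Suc[OF c(2)] word_ok_Suc[OF c(3)]] fixed_mem[OF c(2) c(3)]
      M1[OF G(2) c(2) c(3)] by simp
qed

lemma part_fixed_tw:
  assumes G: "group G" "set gs \<subseteq> carrier G" "\<phi> \<in> iso G G"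
    and d: "decidable (GCP_fixed FGCoset G gs \<phi>)"
  shows "decidable (GTCP_fixed FGCoset G gs \<phi>)"
proof (rule decidable_reduce[OF d rf_Rf])
  interpret sdpctx G \<phi> by (rule sdpctx_I[OF G(1,3)])
  fix c assume "c \<in> fst (GTCP_fixed FGCoset G gs \<phi>)"
  then obtain y Ks x where c: "c = prod_encode (K_code FGCoset y Ks, list_encode x)"
    "K_ok FGCoset (length gs) y Ks" "word_ok (length gs) x"
    unfolding GTCP_fixed_def fixed_problem_def by auto
  show "Rf (2 * length gs) c \<in> fst (GCP_fixed FGCoset G gs \<phi>) \<and>
     (Rf (2 * length gs) c \<in> snd (GCP_fixed FGCoset G gs \<phi>) \<longleftrightarrow> c \<in> snd (GTCP_fixed FGCoset G gs \<phi>))"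
    unfolding GCP_fixed_def GTCP_fixed_def c(1) Rf_code
    using fixed_mem[OF K_ok_t[OF c(2)] word_ok_t[OF c(3)]] fixed_mem[OF c(2) c(3)]
      M2[OF G(2) c(2) c(3)] by simp
qed

lemma aut_ctx: "group G \<Longrightarrow> aut_given G gs ps \<psi> \<Longrightarrow> sdpctx G \<psi>"
  by (rule sdpctx_I) (auto simp: aut_given_def)

lemma part_unif_br:
  assumes G: "group G" "set gs \<subseteq> carrier G"
    and d: "decidable (GCP_unif cls G gs)"
  shows "decidable (GBrCP_unif cls G gs)"
proof (rule decidable_same[OF d])
  fix c assume "c \<in> fst (GBrCP_unif cls G gs)"
  then obtain ps y Ks x where c: "c = prod_encode (enc_words ps, prod_encode (K_code cls y Ks, list_encode x))"
    "\<forall>w\<in>set ps. word_ok (length gs) w" "\<exists>\<psi>. aut_given G gs ps \<psi>"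
    "K_ok cls (length gs) y Ks" "word_ok (length gs) x"
    unfolding GBrCP_unif_def uniform_problem_def fst_conv mem_Collect_eq by blast
  have eq: "(\<exists>\<psi>. aut_given G gs ps \<psi> \<and> gcp_pred cls (sdp G \<psi>) (sdp_gens G gs) y Ks x) \<longleftrightarrow>
        (\<exists>\<psi>. aut_given G gs ps \<psi> \<and> brcp_pred cls G gs \<psi> y Ks x)"
    using sdpctx.M1[OF aut_ctx[OF G(1)] G(2) c(4) c(5)] by blast
  show "c \<in> fst (GCP_unif cls G gs) \<and> (c \<in> snd (GCP_unif cls G gs) \<longleftrightarrow> c \<in> snd (GBrCP_unif cls G gs))"
    unfolding GCP_unif_def GBrCP_unif_def c(1)
    using unif_mem[OF c(2) c(3) K_ok_Suc[OF c(4)] word_ok_Suc[OF c(5)]] unif_mem[OF c(2) c(3) c(4) c(5)] eq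
    by simp
qed

lemma part_unif_tw:
  assumes G: "group G" "set gs \<subseteq> carrier G"
    and d: "decidable (GCP_unif FGCoset G gs)"
  shows "decidable (GTCP_unif FGCoset G gs)"
proof (rule decidable_reduce[OF d rf_Ru])
  fix c assume "c \<in> fst (GTCP_unif FGCoset G gs)"
  then obtain ps y Ks x where c: "c = prod_encode (enc_words ps, prod_encode (K_code FGCoset y Ks, list_encode x))"
    "\<forall>w\<in>set ps. word_ok (length gs) w" "\<exists>\<psi>. aut_given G gs ps \<psi>"
    "K_ok FGCoset (length gs) y Ks" "word_ok (length gs) x"
    unfolding GTCP_unif_def uniform_problem_def fst_conv mem_Collect_eq by blast
  have eq: "(\<exists>\<psi>. aut_given G gs ps \<psi> \<and> gcp_pred FGCoset (sdp G \<psi>) (sdp_gens G gs) (2 * length gs # y) Ks (2 * length gs # x)) \<longleftrightarrow>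
        (\<exists>\<psi>. aut_given G gs ps \<psi> \<and> tcp_pred FGCoset G gs \<psi> y Ks x)"
    using sdpctx.M2[OF aut_ctx[OF G(1)] G(2) c(4) c(5)] by blast
  show "Ru (2 * length gs) c \<in> fst (GCP_unif FGCoset G gs) \<and>
     (Ru (2 * length gs) c \<in> snd (GCP_unif FGCoset G gs) \<longleftrightarrow> c \<in> snd (GTCP_unif FGCoset G gs))"
    unfolding GCP_unif_def GTCP_unif_def c(1) Ru_code
    using unif_mem[OF c(2) c(3) K_ok_t[OF c(4)] word_ok_t[OF c(5)]] unif_mem[OF c(2) c(3) c(4) c(5)] eq
    by simp
qed

theorem corollary3p4:
  fixes G :: "('a, 'b) monoid_scheme" and gs :: "'a list" and \<phi> :: "'a \<Rightarrow> 'a"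
  assumes "group G"
    and "set gs \<subseteq> carrier G"
    and "generate G (set gs) = carrier G"
    and "\<phi> \<in> iso G G"
  shows "(decidable (GCP_fixed FG G gs \<phi>) \<longrightarrow> decidable (GBrCP_fixed FG G gs \<phi>))
       \<and> (decidable (GCP_unif FG G gs) \<longrightarrow> decidable (GBrCP_unif FG G gs))
       \<and> (decidable (GCP_fixed FGCoset G gs \<phi>) \<longrightarrow>
            decidable (GBrCP_fixed FGCoset G gs \<phi>) \<and> decidable (GTCP_fixed FGCoset G gs \<phi>))
       \<and> (decidable (GCP_unif FGCoset G gs) \<longrightarrow>
            decidable (GBrCP_unif FGCoset G gs) \<and> decidable (GTCP_unif FGCoset G gs))"
  using part_fixed_br[OF assms(1,2,4)] part_fixed_tw[OF assms(1,2,4)]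
    part_unif_br[OF assms(1,2)] part_unif_tw[OF assms(1,2)] by blast

end
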